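(* Let $n\ge 1$. Every game of Planted Brussels Sprouts of order $n$ ends after exactly $n-1$ moves, no matter how the moves are chosen.
   Context: Planted Brussels Sprouts of order $n$: start with a closed disk with $n$ marked points on its boundary circle, labeled $1,\dots,n$ in clockwise order. Attached to each marked point is an arm, a short segment pointing into the interior of the disk; these arms are free. A move consists of two steps. First, choose two free arms and join their free ends by a simple curve (an arc) in the disk that does not intersect any previously drawn arc or arm; the two joined arms cease to be free. Second, mark a point (a notch) on the new arc, from which two new free arms emanate, one on each side of the arc. The game ends when no move is possible. *)

theory Defs
  imports Main
begin

text \<open>Everything drawn is connected to the boundary circle, so every region of the
  disk is simply connected and is determined (for the purposes of the game) by
  the cyclic sequence of free arms lying on its boundary.  A position is the
  list of regions; each region is a list of free arms read in cyclic order.\<close>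

type_synonym arm = nat
type_synonym region = "arm list"
type_synonym position = "region list"

definition free_arms :: "position \<Rightarrow> arm set" where
  "free_arms S = \<Union> (set (map set S))"

definition initial :: "nat \<Rightarrow> position" where
  "initial n = [[Suc 0..<Suc n]]"

text \<open>A move: in some region R, rotate its cyclic boundary so that it reads
  a, xs, b, ys; join the free arms a and b by an arc inside R.  The arc splits R
  into the region bounded by a, xs, b and the arc, and the region bounded by
  b, ys, a and the arc.  The notch on the arc contributes one new free arm
  (c, resp. d) to each of the two new regions.\<close>
inductive move :: "position \<Rightarrow> position \<Rightarrow> bool" where
  "\<lbrakk> rotate k R = a # xs @ b # ys;
     c \<notin> free_arms (A @ R # B); d \<notin> free_arms (A @ R # B); c \<noteq> d \<rbrakk>
   \<Longrightarrow> move (A @ R # B) (A @ (xs @ [c]) # (ys @ [d]) # B)"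

definition game_over :: "position \<Rightarrow> bool" where
  "game_over S \<longleftrightarrow> \<not> (\<exists>S'. move S S')"

definition is_play :: "nat \<Rightarrow> position list \<Rightarrow> bool" where
  "is_play n ps \<longleftrightarrow> ps \<noteq> [] \<and> hd ps = initial n \<and>
     (\<forall>i. Suc i < length ps \<longrightarrow> move (ps ! i) (ps ! Suc i))"

end

theory Submission
  imports Defs
begin

lemma move_props:
  assumes "move S S'"
  shows "length S' = Suc (length S) \<and> sum_list (map length S') = sum_list (map length S)
         \<and> ((\<forall>r\<in>set S. r \<noteq> []) \<longrightarrow> (\<forall>r\<in>set S'. r \<noteq> []))"
  using assms
proof cases
  case (1 k R a xs b ys c A d B)
  have "length (rotate k R) = length R" by simp
  then have "length R = Suc (Suc (length xs + length ys))" using 1 by simp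
  then show ?thesis using 1 by auto
qed

lemma finite_free: "finite (free_arms S)"
  unfolding free_arms_def by auto

lemma long_region_move:
  assumes "R \<in> set S" "2 \<le> length R"
  shows "\<exists>S'. move S S'"
proof -
  obtain A B where S: "S = A @ R # B" using assms(1) by (metis in_set_conv_decomp)
  obtain a b ys where R: "R = a # b # ys" using assms(2)
    by (metis One_nat_def Suc_1 Suc_le_length_iff le_SucE not_less_eq_eq)
  obtain c where c: "c \<notin> free_arms S"
    using ex_new_if_finite[OF infinite_UNIV_nat finite_free] by blast
  obtain d where d: "d \<notin> insert c (free_arms S)"
    using ex_new_if_finite[OF infinite_UNIV_nat] finite_free by (metis finite_insert)
  have "rotate 0 R = a # [] @ b # ys" using R by simp
  from move.intros[OF this, of c A B d] c d S
  show ?thesis by auto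
qed

lemma play_inv:
  assumes "is_play n ps" "i < length ps" and n1: "n \<ge> 1"
  shows "length (ps ! i) = Suc i \<and> sum_list (map length (ps ! i)) = n
         \<and> (\<forall>r\<in>set (ps ! i). r \<noteq> [])"
  using assms(2)
proof (induction i)
  case 0
  have "ps ! 0 = initial n" using assms(1) unfolding is_play_def by (metis hd_conv_nth)
  then show ?case using n1 by (simp add: initial_def)
next
  case (Suc i)
  then have "move (ps ! i) (ps ! Suc i)" using assms(1) unfolding is_play_def by blast
  from move_props[OF this] Suc show ?case by simp
qed

lemma sum_ge_len:
  assumes "\<forall>r\<in>set S. r \<noteq> []"
  shows "length S \<le> sum_list (map length S)"
  using assms
proof (induction S)
  case Nil then show ?case by simp
next
  case (Cons r S)
  then have "1 \<le> length r" by (simp add: Suc_le_eq)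
  then show ?case using Cons by simp
qed

lemma sum_eq_len:
  assumes "\<forall>r\<in>set S. length r = 1"
  shows "sum_list (map length S) = length S"
  using assms by (induction S) auto

theorem mainTheorem1:
  fixes n :: nat
  assumes "n \<ge> 1"
  shows "(\<forall>ps. is_play n ps \<longrightarrow> length ps - 1 \<le> n - 1) \<and>
         (\<forall>ps. is_play n ps \<and> game_over (last ps) \<longrightarrow> length ps - 1 = n - 1)"
proof (intro conjI allI impI)
  fix ps assume p: "is_play n ps"
  then have ne: "ps \<noteq> []" unfolding is_play_def by simp
  then have last: "last ps = ps ! (length ps - 1)" by (simp add: last_conv_nth)
  have inv: "length (last ps) = length ps \<and> sum_list (map length (last ps)) = n
         \<and> (\<forall>r\<in>set (last ps). r \<noteq> [])"
    using play_inv[OF p, of "length ps - 1"] ne last assms by simp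
  then show "length ps - 1 \<le> n - 1" using sum_ge_len[of "last ps"] by simp
next
  fix ps assume p: "is_play n ps \<and> game_over (last ps)"
  then have ne: "ps \<noteq> []" unfolding is_play_def by simp
  then have last: "last ps = ps ! (length ps - 1)" by (simp add: last_conv_nth)
  have inv: "length (last ps) = length ps \<and> sum_list (map length (last ps)) = n
         \<and> (\<forall>r\<in>set (last ps). r \<noteq> [])"
    using play_inv[of n ps "length ps - 1"] p ne last assms by simp
  have "\<forall>r\<in>set (last ps). length r = 1"
  proof
    fix r assume r: "r \<in> set (last ps)"
    have "\<not> 2 \<le> length r" using long_region_move[OF r] p unfolding game_over_def by blast
    moreover have "r \<noteq> []" using inv r by blast
    ultimately show "length r = 1" by (cases r) (auto simp: Suc_le_eq)
  qed
  from sum_eq_len[OF this] inv show "length ps - 1 = n - 1" by simp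
qed

end
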